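(* Let $D=(V,A,w)$ be a weighted digraph and let $R\in\mathcal{B}(D)$. Then $\mathrm{mac}(D)\ge\frac{w(D)}{4}+\frac{w(R)}{4}$.
   Context: A weighted digraph $D=(V,A,w)$ is a digraph without loops or parallel arcs (opposite arcs allowed) with weights $w:A\to\mathbb{R}_{\ge0}$; $w(H)$ is the total arc weight of a subgraph $H$. For a partition $(X,Y)$ of $V$, $w(X,Y)$ is the total weight of arcs from $X$ to $Y$, and $\mathrm{mac}(D)=\max_{(X,Y)}w(X,Y)$. A subdigraph is connected if its underlying undirected graph is connected. $\mathcal{B}(D)$ denotes the set of bipartite subdigraphs $R$ of $D$ such that for every connected component $R_1$ of $R$ with bipartition $(X_1,Y_1)$, both $X_1$ and $Y_1$ are independent sets in $D$ (no arc of $D$ has both ends in $X_1$, nor both ends in $Y_1$). *)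

theory Defs
  imports Main "HOL-Library.Disjoint_Sets" Complex_Main
begin

text \<open>A weighted digraph: finite vertex set V, arc set A \<subseteq> V \<times> V without loops
 (parallel arcs are impossible since A is a set of pairs; opposite arcs allowed),
 weights w on arcs, nonnegative on A.\<close>
definition weighted_digraph :: "'a set \<Rightarrow> ('a \<times> 'a) set \<Rightarrow> ('a \<times> 'a \<Rightarrow> real) \<Rightarrow> bool" where
  "weighted_digraph V A w \<longleftrightarrow> finite V \<and> A \<subseteq> V \<times> V \<and> (\<forall>v. (v, v) \<notin> A)
     \<and> (\<forall>a\<in>A. w a \<ge> 0)"

definition wt :: "('a \<times> 'a \<Rightarrow> real) \<Rightarrow> ('a \<times> 'a) set \<Rightarrow> real" where
  "wt w B = (\<Sum>a\<in>B. w a)"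

definition cut_weight :: "('a \<times> 'a) set \<Rightarrow> ('a \<times> 'a \<Rightarrow> real) \<Rightarrow> 'a set \<Rightarrow> 'a set \<Rightarrow> real" where
  "cut_weight A w X Y = wt w {(u, v) \<in> A. u \<in> X \<and> v \<in> Y}"

text \<open>mac(D): maximum over partitions (X, Y) of V (X = V - Y; parts may be empty).\<close>
definition mac :: "'a set \<Rightarrow> ('a \<times> 'a) set \<Rightarrow> ('a \<times> 'a \<Rightarrow> real) \<Rightarrow> real" where
  "mac V A w = Max {cut_weight A w X (V - X) | X. X \<subseteq> V}"

definition subdigraph :: "'a set \<Rightarrow> ('a \<times> 'a) set \<Rightarrow> 'a set \<Rightarrow> ('a \<times> 'a) set \<Rightarrow> bool" where
  "subdigraph V A VR AR \<longleftrightarrow> VR \<subseteq> V \<and> AR \<subseteq> A \<and> AR \<subseteq> VR \<times> VR"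

definition independent :: "('a \<times> 'a) set \<Rightarrow> 'a set \<Rightarrow> bool" where
  "independent A S \<longleftrightarrow> (\<forall>u v. (u, v) \<in> A \<longrightarrow> \<not> (u \<in> S \<and> v \<in> S))"

definition components :: "'a set \<Rightarrow> ('a \<times> 'a) set \<Rightarrow> 'a set set" where
  "components VR AR = {{u \<in> VR. (v, u) \<in> (AR \<union> AR\<inverse>)\<^sup>*} | v. v \<in> VR}"

definition is_bipartition :: "('a \<times> 'a) set \<Rightarrow> 'a set \<Rightarrow> 'a set \<Rightarrow> 'a set \<Rightarrow> bool" where
  "is_bipartition AR C X1 Y1 \<longleftrightarrow> X1 \<union> Y1 = C \<and> X1 \<inter> Y1 = {}
     \<and> (\<forall>(u, v)\<in>AR. u \<in> C \<longrightarrow> (u \<in> X1 \<and> v \<in> Y1) \<or> (u \<in> Y1 \<and> v \<in> X1))"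

definition calB :: "'a set \<Rightarrow> ('a \<times> 'a) set \<Rightarrow> ('a set \<times> ('a \<times> 'a) set) set" where
  "calB V A = {(VR, AR). subdigraph V A VR AR \<and>
     (\<forall>C\<in>components VR AR. \<exists>X1 Y1. is_bipartition AR C X1 Y1
        \<and> independent A X1 \<and> independent A Y1)}"

end

theory Submission
  imports Defs
begin

lemma count_pow:
  assumes "finite U" "K \<subseteq> U"
  shows "card {S\<in>Pow U. \<forall>k\<in>K. (k\<in>S) = P k} = 2 ^ (card U - card K)"
proof -
  have "bij_betw (\<lambda>T. T \<union> {k\<in>K. P k}) (Pow (U-K)) {S\<in>Pow U. \<forall>k\<in>K. (k\<in>S) = P k}"
  proof (rule bij_betw_byWitness[where f'="\<lambda>S. S - K"])
    show "\<forall>T\<in>Pow (U-K). T \<union> {k\<in>K. P k} - K = T" by blast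
    show "\<forall>S\<in>{S\<in>Pow U. \<forall>k\<in>K. (k\<in>S) = P k}. S - K \<union> {k\<in>K. P k} = S" by blast
    show "(\<lambda>T. T \<union> {k\<in>K. P k}) ` Pow (U-K) \<subseteq> {S\<in>Pow U. \<forall>k\<in>K. (k\<in>S) = P k}"
      using assms(2) by blast
    show "(\<lambda>S. S - K) ` {S\<in>Pow U. \<forall>k\<in>K. (k\<in>S) = P k} \<subseteq> Pow (U-K)" by blast
  qed
  then have "card (Pow (U-K)) = card {S\<in>Pow U. \<forall>k\<in>K. (k\<in>S) = P k}"
    by (rule bij_betw_same_card)
  then have "card {S\<in>Pow U. \<forall>k\<in>K. (k\<in>S) = P k} = card (Pow (U-K))"
    by (rule sym)
  also have "\<dots> = 2 ^ (card U - card K)"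
    using assms by (simp add: card_Pow card_Diff_subset finite_subset)
  finally show ?thesis .
qed

lemma pow_div4: "n \<ge> 2 \<Longrightarrow> (2::real) ^ (n - 2) = 2 ^ n / 4"
proof -
  assume "n \<ge> 2"
  then have "n = (n-2) + 2" by simp
  then have "(2::real) ^ n = 2^(n-2) * 4" by (metis power_add numeral_Bit0 power2_eq_square mult_2 numeral_One)
  then show ?thesis by simp
qed

lemma pow_div2: "n \<ge> 1 \<Longrightarrow> (2::real) ^ (n - 1) = 2 ^ n / 2"
proof -
  assume "n \<ge> 1"
  then have "n = Suc (n-1)" by simp
  then have "(2::real) ^ n = 2^(n-1) * 2" by (metis power_Suc mult.commute)
  then show ?thesis by simp
qed

theorem mainTheorem4:
  fixes V :: "'a set" and A :: "('a \<times> 'a) set" and w :: "'a \<times> 'a \<Rightarrow> real"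
    and VR :: "'a set" and AR :: "('a \<times> 'a) set"
  assumes "weighted_digraph V A w"
    and "(VR, AR) \<in> calB V A"
  shows "mac V A w \<ge> wt w A / 4 + wt w AR / 4"
proof -
  have finV: "finite V" and AV: "A \<subseteq> V \<times> V" and noloop: "\<And>v. (v,v) \<notin> A"
    and wpos: "\<And>a. a \<in> A \<Longrightarrow> w a \<ge> 0"
    using assms(1) unfolding weighted_digraph_def by auto
  have finA: "finite A" using finV AV by (meson finite_SigmaI finite_subset)
  have sub: "VR \<subseteq> V" "AR \<subseteq> A" "AR \<subseteq> VR \<times> VR"
    using assms(2) unfolding calB_def subdigraph_def by auto
  have "\<forall>C\<in>components VR AR. \<exists>X1 Y1. is_bipartition AR C X1 Y1
        \<and> independent A X1 \<and> independent A Y1"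
    using assms(2) unfolding calB_def by auto
  then obtain XX YY where XY: "\<And>C. C\<in>components VR AR \<Longrightarrow> is_bipartition AR C (XX C) (YY C)
        \<and> independent A (XX C) \<and> independent A (YY C)"
    by metis
  define R where "R = AR \<union> AR\<inverse>"
  define C where "C u = {x\<in>VR. (u,x) \<in> R\<^sup>*}" for u
  have symR: "(y,x) \<in> R\<^sup>*" if "(x,y) \<in> R\<^sup>*" for x y
  proof -
    have "(y,x) \<in> (R\<inverse>)\<^sup>*" using that by (simp add: rtrancl_converseI)
    moreover have "R\<inverse> = R" unfolding R_def by auto
    ultimately show ?thesis by simp
  qed
  have Ceq: "C v = C u" if "u \<in> VR" "v \<in> C u" for u v
  proof -
    have uv: "(u,v) \<in> R\<^sup>*" using that by (simp add: C_def)
    have vu: "(v,u) \<in> R\<^sup>*" using symR[OF uv] .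
    show ?thesis unfolding C_def using uv vu
      by (auto intro: rtrancl_trans)
  qed
  have Ccomp: "C u \<in> components VR AR" if "u \<in> VR" for u
    using that unfolding components_def C_def R_def by auto
  have uC: "u \<in> C u" if "u \<in> VR" for u using that by (simp add: C_def)
  have Csub: "C u \<subseteq> VR" for u by (auto simp: C_def)
  define unit where "unit u = (if u \<in> VR then C u else {u})" for u
  define s where "s u = (u \<in> VR \<and> u \<in> XX (C u))" for u
  have sameunit: "u \<in> VR \<and> v \<in> VR \<and> s v = (\<not> s u)"
    if uvA: "(u,v) \<in> A" and eq: "unit u = unit v" for u v
  proof -
    have neq: "u \<noteq> v" using uvA noloop by auto
    have uV: "u \<in> VR"
    proof (rule ccontr)
      assume nu: "u \<notin> VR"
      show False
      proof (cases "v \<in> VR")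
        case True
        then have "{u} = C v" using eq nu by (simp add: unit_def)
        then show False using uC[OF True] neq by auto
      next
        case False
        then show False using eq nu neq by (simp add: unit_def)
      qed
    qed
    have vV: "v \<in> VR"
    proof (rule ccontr)
      assume nv: "v \<notin> VR"
      then have "C u = {v}" using eq uV by (simp add: unit_def)
      then show False using uC[OF uV] neq by auto
    qed
    have CC: "C v = C u" using eq uV vV by (simp add: unit_def)
    define K where "K = C u"
    have bp: "is_bipartition AR K (XX K) (YY K)" "independent A (XX K)" "independent A (YY K)"
      using XY[OF Ccomp[OF uV]] by (auto simp: K_def)
    have "u \<in> K" "v \<in> K" using uC uV vV CC by (auto simp: K_def)
    then have "u \<in> XX K \<union> YY K" "v \<in> XX K \<union> YY K" "XX K \<inter> YY K = {}"
      using bp(1) unfolding is_bipartition_def by auto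
    moreover have "\<not> (u \<in> XX K \<and> v \<in> XX K)" "\<not> (u \<in> YY K \<and> v \<in> YY K)"
      using bp(2,3) uvA unfolding independent_def by auto
    ultimately have "(v \<in> XX K) = (\<not> u \<in> XX K)" by blast
    then show ?thesis using uV vV CC by (simp add: s_def K_def)
  qed
  have ARunit: "unit u = unit v" if "(u,v) \<in> AR" for u v
  proof -
    have uV: "u \<in> VR" and vV: "v \<in> VR" using that sub(3) by auto
    have "(u,v) \<in> R\<^sup>*" using that by (auto simp: R_def)
    then have "v \<in> C u" using vV by (simp add: C_def)
    then have "C v = C u" using Ceq uV by blast
    then show ?thesis using uV vV by (simp add: unit_def)
  qed
  define U where "U = unit ` V"
  have finU: "finite U" using finV by (simp add: U_def)
  define n where "n = card U"
  define X where "X S = {v\<in>V. (unit v \<in> S) = s v}" for S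
  define cr where "cr a S = ((unit (fst a) \<in> S) = s (fst a) \<and> (unit (snd a) \<in> S) = (\<not> s (snd a)))" for a S
  have cutX: "cut_weight A w (X S) (V - X S) = (\<Sum>a\<in>A. if cr a S then w a else 0)" for S
  proof -
    have "{(u, v) \<in> A. u \<in> X S \<and> v \<in> V - X S} = {a\<in>A. cr a S}"
      using AV by (auto simp: X_def cr_def)
    then show ?thesis unfolding cut_weight_def wt_def
      by (simp add: sum.inter_filter[OF finA])
  qed
  have cnt: "w a * real (card {S\<in>Pow U. cr a S}) \<ge> 2^n * (w a / 4 + (if a \<in> AR then w a / 4 else 0))"
    if aA: "a \<in> A" for a
  proof -
    obtain u v where a: "a = (u,v)" by fastforce
    have uvA: "(u,v) \<in> A" using aA a by simp
    have uU: "unit u \<in> U" and vU: "unit v \<in> U" using uvA AV by (auto simp: U_def)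
    have wa: "w a \<ge> 0" using wpos aA .
    show ?thesis
    proof (cases "unit u = unit v")
      case True
      have sv: "s v = (\<not> s u)" using sameunit[OF uvA True] by simp
      have "{S\<in>Pow U. cr a S} = {S\<in>Pow U. \<forall>k\<in>{unit u}. (k\<in>S) = (\<lambda>_. s u) k}"
        using True sv by (auto simp: cr_def a)
      then have "card {S\<in>Pow U. cr a S} = 2 ^ (n - 1)"
        using count_pow[OF finU, of "{unit u}"] uU by (simp add: n_def)
      moreover have "n \<ge> 1" using uU finU by (simp add: n_def Suc_le_eq card_gt_0_iff; blast)
      ultimately have c: "real (card {S\<in>Pow U. cr a S}) = 2^n/2"
        using pow_div2 by simp
      show ?thesis using wa unfolding c by (auto simp: field_simps)
    next
      case False
      have nAR: "a \<notin> AR" using ARunit False a by auto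
      define P where "P k = (if k = unit u then s u else \<not> s v)" for k
      have "{S\<in>Pow U. cr a S} = {S\<in>Pow U. \<forall>k\<in>{unit u, unit v}. (k\<in>S) = P k}"
        using False by (auto simp: cr_def a P_def)
      then have "card {S\<in>Pow U. cr a S} = 2 ^ (n - 2)"
        using count_pow[OF finU, of "{unit u, unit v}" P] uU vU False by (simp add: n_def)
      moreover have "n \<ge> 2"
      proof -
        have "card {unit u, unit v} \<le> n" unfolding n_def
          using uU vU finU by (intro card_mono) auto
        then show ?thesis using False by simp
      qed
      ultimately have c: "real (card {S\<in>Pow U. cr a S}) = 2^n/4"
        using pow_div4 by simp
      show ?thesis using wa nAR unfolding c by (auto simp: field_simps)
    qed
  qed
  have finM: "finite {cut_weight A w Y (V - Y) | Y. Y \<subseteq> V}"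
  proof -
    have "{cut_weight A w Y (V - Y) | Y. Y \<subseteq> V} = (\<lambda>Y. cut_weight A w Y (V - Y)) ` Pow V" by auto
    then show ?thesis using finV by simp
  qed
  have macge: "cut_weight A w (X S) (V - X S) \<le> mac V A w" for S
    unfolding mac_def by (rule Max_ge[OF finM]) (auto simp: X_def)
  have "(\<Sum>S\<in>Pow U. cut_weight A w (X S) (V - X S)) = (\<Sum>S\<in>Pow U. \<Sum>a\<in>A. if cr a S then w a else 0)"
    by (simp add: cutX)
  also have "\<dots> = (\<Sum>a\<in>A. \<Sum>S\<in>Pow U. if cr a S then w a else 0)"
    by (rule sum.swap)
  also have "\<dots> = (\<Sum>a\<in>A. w a * real (card {S\<in>Pow U. cr a S}))"
  proof (rule sum.cong[OF refl])
    fix a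
    have "(\<Sum>S\<in>Pow U. if cr a S then w a else 0) = (\<Sum>S\<in>{S\<in>Pow U. cr a S}. w a)"
      by (rule sum.inter_filter[symmetric]) (simp add: finU)
    also have "\<dots> = of_nat (card {S\<in>Pow U. cr a S}) * w a" by (rule sum_constant)
    finally show "(\<Sum>S\<in>Pow U. if cr a S then w a else 0) = w a * real (card {S\<in>Pow U. cr a S})"
      by (metis mult.commute)
  qed
  also have "\<dots> \<ge> (\<Sum>a\<in>A. 2^n * (w a / 4 + (if a \<in> AR then w a / 4 else 0)))"
    by (rule sum_mono) (use cnt in auto)
  finally have ge1: "(\<Sum>S\<in>Pow U. cut_weight A w (X S) (V - X S)) \<ge> (\<Sum>a\<in>A. 2^n * (w a / 4 + (if a \<in> AR then w a / 4 else 0)))" .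
  have "(\<Sum>a\<in>A. 2^n * (w a / 4 + (if a \<in> AR then w a / 4 else 0))) = 2^n * (wt w A / 4 + (\<Sum>a\<in>A. if a \<in> AR then w a else 0) / 4)"
  proof -
    have e: "2^n * (w a / 4 + (if a \<in> AR then w a / 4 else 0)) = (2^n/4) * w a + (2^n/4) * (if a \<in> AR then w a else 0)" for a :: "'a \<times> 'a"
      by (simp add: algebra_simps)
    show ?thesis unfolding e sum.distrib sum_distrib_left[symmetric] wt_def by (simp add: algebra_simps)
  qed
  also have "(\<Sum>a\<in>A. if a \<in> AR then w a else 0) = wt w AR"
    unfolding wt_def using sub(2) finA by (simp add: sum.inter_filter[symmetric]) (metis (mono_tags, lifting) Collect_mem_eq subset_iff conj_commute Collect_cong)
  finally have ge2: "(\<Sum>S\<in>Pow U. cut_weight A w (X S) (V - X S)) \<ge> 2^n * (wt w A / 4 + wt w AR / 4)"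
    using ge1 by simp
  have le1: "(\<Sum>S\<in>Pow U. cut_weight A w (X S) (V - X S)) \<le> (\<Sum>S\<in>Pow U. mac V A w)"
    by (rule sum_mono) (rule macge)
  have eq1: "(\<Sum>S\<in>Pow U. mac V A w) = 2^n * mac V A w"
    using finU by (simp add: card_Pow n_def)
  have fin: "2^n * (wt w A / 4 + wt w AR / 4) \<le> 2^n * mac V A w"
    using le1 eq1 ge2 by linarith
  have pos: "(0::real) < 2^n" by simp
  show ?thesis using mult_le_cancel_left_pos[OF pos] fin by blast
qed

end
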